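(* Assume $\mathfrak h=\mathfrak s$, and let $X=\prod_{j\in J}X_j$ be a product of topological spaces. Then the following are equivalent: (1) $X$ is sequentially compact; (2) every $X_j$ is sequentially compact, and the set of $j\in J$ such that $X_j$ contains a sequence which does not converge has cardinality $<\mathfrak s$; (3) every $X_j$ is sequentially compact, and the set of $j\in J$ such that $X_j$ is not ultraconnected has cardinality $<\mathfrak s$.
   Context: No separation axioms are assumed; all topological spaces are nonempty. A space is sequentially compact if every sequence $(x_n)_{n\in\omega}$ has a convergent subsequence. A space is ultraconnected if no two nonempty closed subsets of it are disjoint. The splitting number $\mathfrak s$ is the least cardinality of a family $\mathcal S\subseteq[\omega]^\omega$ such that for every $A\in[\omega]^\omega$ there is $S\in\mathcal S$ with both $A\cap S$ and $A\setminus S$ infinite. The cardinal $\mathfrak h$ is the smallest cardinal such that there exist $\mathfrak h$ sequentially compact spaces whose product is not sequentially compact. *)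

theory Defs
  imports "HOL-Analysis.Analysis"
begin

definition seq_compact_space :: "'a topology \<Rightarrow> bool" where
  "seq_compact_space X \<longleftrightarrow>
     (\<forall>\<sigma>::nat \<Rightarrow> 'a. range \<sigma> \<subseteq> topspace X \<longrightarrow>
        (\<exists>r l. strict_mono r \<and> limitin X (\<sigma> \<circ> r) l sequentially))"

definition ultraconnected_space :: "'a topology \<Rightarrow> bool" where
  "ultraconnected_space X \<longleftrightarrow>
     (\<forall>A B. closedin X A \<and> closedin X B \<and> A \<noteq> {} \<and> B \<noteq> {} \<longrightarrow> A \<inter> B \<noteq> {})"

definition has_nonconvergent_seq :: "'a topology \<Rightarrow> bool" where
  "has_nonconvergent_seq X \<longleftrightarrow>
     (\<exists>\<sigma>::nat \<Rightarrow> 'a. range \<sigma> \<subseteq> topspace X \<and> \<not> (\<exists>l. limitin X \<sigma> l sequentially))"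

definition splitting_family :: "nat set set \<Rightarrow> bool" where
  "splitting_family \<S> \<longleftrightarrow>
     \<S> \<subseteq> {S. infinite S} \<and>
     (\<forall>A. infinite A \<longrightarrow> (\<exists>S\<in>\<S>. infinite (A \<inter> S) \<and> infinite (A - S)))"

text \<open>The cardinality of A is strictly less than the splitting number s, i.e. no
  splitting family has cardinality at most that of A.\<close>
definition card_less_s :: "'i set \<Rightarrow> bool" where
  "card_less_s A \<longleftrightarrow> \<not> (\<exists>\<S>. splitting_family \<S> \<and> (card_of \<S>, card_of A) \<in> ordLeq)"

end

theory Submission
  imports Defs
begin

lemma closed_limit_frequent:
  assumes "closedin Y A" "limitin Y \<sigma> l sequentially" "\<And>M. \<exists>n\<ge>M. \<sigma> n \<in> A"
  shows "l \<in> A"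
proof (rule ccontr)
  assume "l \<notin> A"
  hence "openin Y (topspace Y - A)" "l \<in> topspace Y - A"
    using assms(1,2) by (auto simp: limitin_def)
  hence "eventually (\<lambda>n. \<sigma> n \<in> topspace Y - A) sequentially"
    using assms(2) by (auto simp: limitin_def)
  then obtain M where "\<And>n. n \<ge> M \<Longrightarrow> \<sigma> n \<in> topspace Y - A"
    by (auto simp: eventually_sequentially)
  with assms(3)[of M] show False by auto
qed

lemma nonultra_nonconv:
  assumes "\<not> ultraconnected_space Y"
  shows "has_nonconvergent_seq Y"
proof -
  obtain A B where AB: "closedin Y A" "closedin Y B" "A \<noteq> {}" "B \<noteq> {}" "A \<inter> B = {}"
    using assms unfolding ultraconnected_space_def by blast
  obtain a b where ab: "a \<in> A" "b \<in> B" using AB by blast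
  define \<sigma> where "\<sigma> = (\<lambda>n::nat. if even n then a else b)"
  have r: "range \<sigma> \<subseteq> topspace Y"
    using ab closedin_subset[OF AB(1)] closedin_subset[OF AB(2)] unfolding \<sigma>_def by auto
  have "\<not> limitin Y \<sigma> l sequentially" for l
  proof
    assume L: "limitin Y \<sigma> l sequentially"
    have "l \<in> A"
      by (rule closed_limit_frequent[OF AB(1) L])
         (metis \<sigma>_def ab(1) dvd_triv_left le_add2 mult_2)
    moreover have "l \<in> B"
      by (rule closed_limit_frequent[OF AB(2) L])
         (metis \<sigma>_def ab(2) odd_two_times_div_two_succ even_add odd_one le_add2 add.commute Suc_eq_plus1 le_SucI mult_2 le_add1 dvd_triv_left)
    ultimately show False using AB(5) by blast
  qed
  thus ?thesis using r unfolding has_nonconvergent_seq_def by blast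
qed

lemma ultra_conv:
  assumes sc: "seq_compact_space Y" and uc: "ultraconnected_space Y"
    and r: "range \<sigma> \<subseteq> topspace Y"
  shows "\<exists>l. limitin Y \<sigma> l sequentially"
proof -
  define C where "C = (\<lambda>n. \<Inter>k\<in>{..n}. Y closure_of {\<sigma> k})"
  have C: "closedin Y (C n) \<and> C n \<noteq> {}" for n
  proof (induction n)
    case 0
    have "\<sigma> 0 \<in> Y closure_of {\<sigma> 0}" using r closure_of_subset[of "{\<sigma> 0}" Y] by auto
    then show ?case by (auto simp: C_def)
  next
    case (Suc n)
    have eq: "C (Suc n) = C n \<inter> Y closure_of {\<sigma> (Suc n)}"
      by (auto simp: C_def atMost_Suc)
    have "\<sigma> (Suc n) \<in> Y closure_of {\<sigma> (Suc n)}" using r closure_of_subset[of "{\<sigma> (Suc n)}" Y] by auto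
    hence "Y closure_of {\<sigma> (Suc n)} \<noteq> {}" by auto
    then show ?case using Suc uc unfolding eq ultraconnected_space_def
      by (auto intro!: closedin_Int)
  qed
  define p where "p = (\<lambda>n. SOME x. x \<in> C n)"
  have p: "p n \<in> C n" for n using C[of n] unfolding p_def by (meson ex_in_conv someI_ex)
  have pt: "range p \<subseteq> topspace Y" using p C closedin_subset by blast
  obtain rr l where rr: "strict_mono rr" and L: "limitin Y (p \<circ> rr) l sequentially"
    using sc pt unfolding seq_compact_space_def by blast
  have "limitin Y \<sigma> l sequentially"
    unfolding limitin_def
  proof (intro conjI allI impI)
    show "l \<in> topspace Y" using L by (simp add: limitin_def)
    fix U assume U: "openin Y U \<and> l \<in> U"
    then obtain M where M: "\<And>m. m \<ge> M \<Longrightarrow> p (rr m) \<in> U"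
      using L by (auto simp: limitin_def eventually_sequentially)
    have "\<sigma> k \<in> U" for k
    proof -
      have "p (rr (max k M)) \<in> U" using M by simp
      moreover have "k \<le> rr (max k M)"
        using seq_suble[OF rr, of "max k M"] by simp
      hence "p (rr (max k M)) \<in> Y closure_of {\<sigma> k}"
        using p[of "rr (max k M)"] by (auto simp: C_def)
      ultimately show ?thesis using U by (auto simp: in_closure_of)
    qed
    thus "eventually (\<lambda>n. \<sigma> n \<in> U) sequentially" by simp
  qed
  thus ?thesis by blast
qed

lemma nonconv_nonultra:
  assumes "seq_compact_space Y" "has_nonconvergent_seq Y"
  shows "\<not> ultraconnected_space Y"
  using assms ultra_conv unfolding has_nonconvergent_seq_def by blast

lemma factor_sc:
  fixes X :: "'i \<Rightarrow> 'a topology"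
  assumes sc: "seq_compact_space (product_topology X J)"
    and ne: "\<forall>j\<in>J. topspace (X j) \<noteq> {}" and k: "k \<in> J"
  shows "seq_compact_space (X k)"
  unfolding seq_compact_space_def
proof (intro allI impI)
  fix \<sigma> :: "nat \<Rightarrow> 'a" assume r: "range \<sigma> \<subseteq> topspace (X k)"
  obtain z where z: "z \<in> topspace (product_topology X J)"
  proof -
    have "(\<Pi>\<^sub>E i\<in>J. topspace (X i)) \<noteq> {}" using ne by (simp add: PiE_eq_empty_iff)
    thus ?thesis using that by auto
  qed
  define \<tau> where "\<tau> = (\<lambda>n. z(k := \<sigma> n))"
  have "range \<tau> \<subseteq> topspace (product_topology X J)"
    using z r k by (auto simp: \<tau>_def PiE_def Pi_def extensional_def)
  then obtain rr l where rr: "strict_mono rr" and L: "limitin (product_topology X J) (\<tau> \<circ> rr) l sequentially"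
    using sc unfolding seq_compact_space_def by blast
  have "limitin (X k) (\<lambda>n. (\<tau> \<circ> rr) n k) (l k) sequentially"
    using L k by (simp add: limitin_componentwise)
  hence "limitin (X k) (\<sigma> \<circ> rr) (l k) sequentially" by (simp add: \<tau>_def o_def)
  thus "\<exists>r l. strict_mono r \<and> limitin (X k) (\<sigma> \<circ> r) l sequentially" using rr by blast
qed

lemma small_nonconv:
  fixes X :: "'i \<Rightarrow> 'a topology"
  assumes sc: "seq_compact_space (product_topology X J)"
    and ne: "\<forall>j\<in>J. topspace (X j) \<noteq> {}"
  shows "card_less_s {j\<in>J. has_nonconvergent_seq (X j)}"
  unfolding card_less_s_def
proof
  let ?N = "{j\<in>J. has_nonconvergent_seq (X j)}"
  assume "\<exists>\<S>. splitting_family \<S> \<and> (card_of \<S>, card_of ?N) \<in> ordLeq"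
  then obtain \<S> where sp: "splitting_family \<S>" and le: "(card_of \<S>, card_of ?N) \<in> ordLeq" by blast
  have "\<exists>f. inj_on f \<S> \<and> f ` \<S> \<subseteq> ?N" using card_of_ordLeq[of \<S> ?N] le by simp
  then obtain f where f: "inj_on f \<S>" "f ` \<S> \<subseteq> ?N" by blast
  have "\<forall>j\<in>?N. \<exists>A. \<exists>B. closedin (X j) A \<and> closedin (X j) B \<and> A \<noteq> {} \<and> B \<noteq> {} \<and> A \<inter> B = {}"
  proof
    fix j assume j: "j \<in> ?N"
    hence "\<not> ultraconnected_space (X j)"
      using nonconv_nonultra factor_sc[OF sc ne] by blast
    thus "\<exists>A. \<exists>B. closedin (X j) A \<and> closedin (X j) B \<and> A \<noteq> {} \<and> B \<noteq> {} \<and> A \<inter> B = {}"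
      unfolding ultraconnected_space_def by blast
  qed
  then obtain A B where AB: "\<And>j. j \<in> ?N \<Longrightarrow> closedin (X j) (A j) \<and> closedin (X j) (B j) \<and> A j \<noteq> {} \<and> B j \<noteq> {} \<and> A j \<inter> B j = {}"
    by metis
  define a where "a = (\<lambda>j. SOME x. x \<in> A j)"
  define b where "b = (\<lambda>j. SOME x. x \<in> B j)"
  have ab: "a j \<in> A j" "b j \<in> B j" if "j \<in> ?N" for j
    using AB[OF that] unfolding a_def b_def by (meson ex_in_conv someI_ex)+
  obtain z where z: "z \<in> topspace (product_topology X J)"
  proof -
    have "(\<Pi>\<^sub>E i\<in>J. topspace (X i)) \<noteq> {}" using ne by (simp add: PiE_eq_empty_iff)
    thus ?thesis using that by auto
  qed
  define \<sigma> where "\<sigma> = (\<lambda>n::nat. \<lambda>j. if j \<in> f ` \<S> then (if n \<in> inv_into \<S> f j then a j else b j) else z j)"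
  have "range \<sigma> \<subseteq> topspace (product_topology X J)"
  proof
    fix x assume "x \<in> range \<sigma>"
    then obtain n where x: "x = \<sigma> n" by blast
    have zz: "z j \<in> topspace (X j)" if "j \<in> J" for j
      using z that by (auto simp: PiE_def Pi_def extensional_def)
    have zz2: "z k = undefined" if "k \<notin> J" for k
      using z that by (auto simp: PiE_def Pi_def extensional_def)
    have aa: "a j \<in> topspace (X j) \<and> b j \<in> topspace (X j)" if "j \<in> f ` \<S>" for j
    proof -
      have jN: "j \<in> ?N" using that f(2) by blast
      show ?thesis using ab[OF jN] AB[OF jN] closedin_subset by blast
    qed
    show "x \<in> topspace (product_topology X J)"
      unfolding x topspace_product_topology
    proof (rule PiE_I)
      fix j assume "j \<in> J" thus "\<sigma> n j \<in> topspace (X j)"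
        using aa zz unfolding \<sigma>_def by auto
    next
      fix j assume "j \<notin> J" thus "\<sigma> n j = undefined"
        using zz2 f(2) unfolding \<sigma>_def by auto
    qed
  qed
  then obtain rr l where rr: "strict_mono rr" and L: "limitin (product_topology X J) (\<sigma> \<circ> rr) l sequentially"
    using sc unfolding seq_compact_space_def by blast
  have "infinite (range rr)"
    using rr strict_mono_imp_inj_on range_inj_infinite by blast
  then obtain S where S: "S \<in> \<S>" "infinite (range rr \<inter> S)" "infinite (range rr - S)"
    using sp unfolding splitting_family_def by blast
  define j where "j = f S"
  have jN: "j \<in> ?N" using S f unfolding j_def by blast
  have invj: "inv_into \<S> f j = S" using f S unfolding j_def by simp
  have Lj: "limitin (X j) (\<lambda>n. \<sigma> (rr n) j) (l j) sequentially"
    using L jN by (auto simp: limitin_componentwise)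
  have freq: "\<exists>n\<ge>M. rr n \<in> T" if "infinite (range rr \<inter> T)" for M T
  proof -
    have "infinite (range rr \<inter> T - rr ` {..<M})" using that by auto
    then obtain x where "x \<in> range rr \<inter> T" "x \<notin> rr ` {..<M}"
      using infinite_imp_nonempty by blast
    then obtain n where "rr n \<in> T" "rr n \<notin> rr ` {..<M}" by blast
    thus ?thesis by (metis lessThan_iff image_eqI not_less)
  qed
  have "l j \<in> A j"
  proof (rule closed_limit_frequent[OF _ Lj])
    show "closedin (X j) (A j)" using AB[OF jN] by blast
    fix M obtain n where "n \<ge> M" "rr n \<in> S" using freq[OF S(2)] by blast
    thus "\<exists>n\<ge>M. \<sigma> (rr n) j \<in> A j"
      using ab[OF jN] invj S unfolding \<sigma>_def j_def by auto
  qed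
  moreover have "l j \<in> B j"
  proof (rule closed_limit_frequent[OF _ Lj])
    show "closedin (X j) (B j)" using AB[OF jN] by blast
    fix M obtain n where "n \<ge> M" "rr n \<notin> S"
      using freq[of "- S" M] S(3) by (auto simp: Diff_eq)
    thus "\<exists>n\<ge>M. \<sigma> (rr n) j \<in> B j"
      using ab[OF jN] invj S unfolding \<sigma>_def j_def by auto
  qed
  ultimately show False using AB[OF jN] by blast
qed

theorem corollary4p3:
  fixes X :: "'i \<Rightarrow> 'a topology" and J :: "'i set"
  assumes h_ge_s: "\<And>(I :: 'i set) (Y :: 'i \<Rightarrow> 'a topology).
              card_less_s I \<Longrightarrow>
              (\<forall>i\<in>I. topspace (Y i) \<noteq> {} \<and> seq_compact_space (Y i)) \<Longrightarrow>
              seq_compact_space (product_topology Y I)"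
    and nonempty: "\<forall>j\<in>J. topspace (X j) \<noteq> {}"
  shows "(seq_compact_space (product_topology X J)
           \<longleftrightarrow> (\<forall>j\<in>J. seq_compact_space (X j)) \<and>
               card_less_s {j\<in>J. has_nonconvergent_seq (X j)})
       \<and> ((\<forall>j\<in>J. seq_compact_space (X j)) \<and>
               card_less_s {j\<in>J. has_nonconvergent_seq (X j)}
           \<longleftrightarrow> (\<forall>j\<in>J. seq_compact_space (X j)) \<and>
               card_less_s {j\<in>J. \<not> ultraconnected_space (X j)})"
proof -
  let ?N = "{j\<in>J. has_nonconvergent_seq (X j)}"
  have eqsets: "?N = {j\<in>J. \<not> ultraconnected_space (X j)}"
    if "\<forall>j\<in>J. seq_compact_space (X j)"
    using that nonconv_nonultra nonultra_nonconv by blast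
  have dir1: "seq_compact_space (product_topology X J)"
    if fs: "\<forall>j\<in>J. seq_compact_space (X j)" and cs: "card_less_s ?N"
    unfolding seq_compact_space_def
  proof (intro allI impI)
    fix \<sigma> :: "nat \<Rightarrow> 'i \<Rightarrow> 'a"
    assume r: "range \<sigma> \<subseteq> topspace (product_topology X J)"
    have scN: "seq_compact_space (product_topology X ?N)"
      using h_ge_s[OF cs] fs nonempty by blast
    define \<tau> where "\<tau> = (\<lambda>n. restrict (\<sigma> n) ?N)"
    have "range \<tau> \<subseteq> topspace (product_topology X ?N)"
      using r by (auto simp: \<tau>_def PiE_def Pi_def)
    then obtain rr l' where rr: "strict_mono rr" and L: "limitin (product_topology X ?N) (\<tau> \<circ> rr) l' sequentially"
      using scN unfolding seq_compact_space_def by blast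
    have Lc: "l' \<in> extensional ?N" "\<And>i. i \<in> ?N \<Longrightarrow> limitin (X i) (\<lambda>n. \<sigma> (rr n) i) (l' i) sequentially"
      using L by (auto simp: limitin_componentwise \<tau>_def)
    define l where "l = (\<lambda>j. if j \<in> ?N then l' j else if j \<in> J then (SOME x. limitin (X j) (\<lambda>n. \<sigma> (rr n) j) x sequentially) else undefined)"
    have "limitin (product_topology X J) (\<sigma> \<circ> rr) l sequentially"
      unfolding limitin_componentwise
    proof (intro conjI ballI)
      show "l \<in> extensional J" using Lc(1) by (auto simp: l_def extensional_def)
      show "\<forall>\<^sub>F a in sequentially. (\<sigma> \<circ> rr) a \<in> topspace (product_topology X J)"
        using r by (intro always_eventually) auto
      fix i assume i: "i \<in> J"
      show "limitin (X i) (\<lambda>c. (\<sigma> \<circ> rr) c i) (l i) sequentially"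
      proof (cases "i \<in> ?N")
        case True thus ?thesis using Lc(2) by (simp add: l_def o_def)
      next
        case False
        have "range (\<lambda>n. \<sigma> (rr n) i) \<subseteq> topspace (X i)"
          using r i by (fastforce simp: PiE_def Pi_def)
        hence "\<exists>x. limitin (X i) (\<lambda>n. \<sigma> (rr n) i) x sequentially"
          using False i unfolding has_nonconvergent_seq_def by blast
        hence "limitin (X i) (\<lambda>n. \<sigma> (rr n) i) (SOME x. limitin (X i) (\<lambda>n. \<sigma> (rr n) i) x sequentially) sequentially"
          by (rule someI_ex)
        thus ?thesis using False i by (simp add: l_def o_def)
      qed
    qed
    thus "\<exists>r l. strict_mono r \<and> limitin (product_topology X J) (\<sigma> \<circ> r) l sequentially"
      using rr by blast
  qed
  have dir2: "(\<forall>j\<in>J. seq_compact_space (X j)) \<and> card_less_s ?N"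
    if "seq_compact_space (product_topology X J)"
  proof
    show "\<forall>j\<in>J. seq_compact_space (X j)"
      using factor_sc[OF that nonempty] by blast
    show "card_less_s ?N" by (rule small_nonconv[OF that nonempty])
  qed
  show ?thesis
  proof (rule conjI; rule iffI)
    assume "seq_compact_space (product_topology X J)"
    thus "(\<forall>j\<in>J. seq_compact_space (X j)) \<and> card_less_s ?N" by (rule dir2)
  next
    assume "(\<forall>j\<in>J. seq_compact_space (X j)) \<and> card_less_s ?N"
    thus "seq_compact_space (product_topology X J)" using dir1 by blast
  next
    assume a: "(\<forall>j\<in>J. seq_compact_space (X j)) \<and> card_less_s ?N"
    thus "(\<forall>j\<in>J. seq_compact_space (X j)) \<and> card_less_s {j\<in>J. \<not> ultraconnected_space (X j)}"
      using eqsets[of] by simp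
  next
    assume a: "(\<forall>j\<in>J. seq_compact_space (X j)) \<and> card_less_s {j\<in>J. \<not> ultraconnected_space (X j)}"
    thus "(\<forall>j\<in>J. seq_compact_space (X j)) \<and> card_less_s ?N"
      using eqsets by simp
  qed
qed

end
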